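(* There exists a finite set $C\subseteq\mathbb{M}$ such that $\mathrm{ChrMem}(\mathrm{RL}\cap C^\omega)=+\infty$.
   Context: Let $\Omega=\mathbb{N}\times\{0,1\}$ with partial order $(n,a)\preceq(m,b)$ iff $(n,a)=(m,b)$ or $n<m$. Let $\mathbb{M}$ be the set of all functions $f\colon\Omega\to\Omega$ monotone w.r.t. $\preceq$. The Rope Ladder condition $\mathrm{RL}\subseteq\mathbb{M}^\omega$ consists of all sequences $(f_1,f_2,\ldots)\in\mathbb{M}^\omega$ for which there is $(N,b)\in\Omega$ with $f_n\circ\cdots\circ f_1((0,0))\preceq(N,b)$ for all $n\ge1$. For $C\subseteq\mathbb{M}$, $\mathrm{RL}\cap C^\omega$ is regarded as a winning condition over the color set $C$. An arena over a color set $C$ is a tuple $\langle V_P, V_A, E\rangle$ of finite sets with $V_P\cap V_A=\varnothing$, $V=V_P\cup V_A\neq\varnothing$, $E\subseteq V\times C\times V$, every node having an outgoing edge. Paths are non-empty finite/infinite sequences of consecutive edges, plus $0$-length paths $\lambda_v$ at each node. A Protagonist's strategy maps each finite path ending in $V_P$ to an outgoing edge of its last node; a path is consistent with $S$ if every edge leaving a Protagonist node along it is the one chosen by $S$ on the preceding prefix. $S$ is winning from $u$ w.r.t. $W\subseteq C^\omega$ if every infinite path consistent with $S$ from $u$ has color sequence in $W$; $S$ is optimal w.r.t. $W$ if there is no node from which some strategy wins w.r.t. $W$ but $S$ does not. A memory structure is $\langle M,m_{init},\delta\rangle$ with $M$ finite, $\delta\colon M\times E\to M$ (extended to finite edge sequences);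 it is chromatic if $\delta(m,e_1)=\delta(m,e_2)$ whenever $e_1,e_2$ have the same color. A strategy is built on top of it if its choice after a finite path depends only on the last node and the memory state reached from $m_{init}$ on that path. $\mathrm{ChrMem}(W)$ is the least $k\in\mathbb{Z}^+$ such that every arena over $C$ admits a Protagonist's strategy built on top of a chromatic memory structure with $k$ states that is optimal w.r.t. $W$ ($+\infty$ if none exists). *)

theory Defs
  imports Main "HOL-Library.Extended_Nat"
begin

type_synonym omega = "nat \<times> bool"   (* (n,False) = (n,0), (n,True) = (n,1) *)

definition oleq :: "omega \<Rightarrow> omega \<Rightarrow> bool" where
  "oleq x y \<longleftrightarrow> x = y \<or> fst x < fst y"

definition MonoFun :: "(omega \<Rightarrow> omega) set" where
  "MonoFun = {f. \<forall>x y. oleq x y \<longrightarrow> oleq (f x) (f y)}"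

(* comp_seq s n x = f_n o ... o f_1 x, where f_{i+1} = s i *)
primrec comp_seq :: "(nat \<Rightarrow> (omega \<Rightarrow> omega)) \<Rightarrow> nat \<Rightarrow> omega \<Rightarrow> omega" where
  "comp_seq s 0 x = x"
| "comp_seq s (Suc n) x = s n (comp_seq s n x)"

definition RL :: "(nat \<Rightarrow> (omega \<Rightarrow> omega)) set" where
  "RL = {s. (\<forall>i. s i \<in> MonoFun) \<and>
            (\<exists>N b. \<forall>n\<ge>1. oleq (comp_seq s n (0, False)) (N, b))}"

definition omega_seqs :: "'c set \<Rightarrow> (nat \<Rightarrow> 'c) set" where
  "omega_seqs C = {s. \<forall>i. s i \<in> C}"

(* nodes are natural numbers (every finite arena is isomorphic to one of this form) *)
type_synonym 'c edge = "nat \<times> 'c \<times> nat"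

record 'c arena =
  VP :: "nat set"
  VA :: "nat set"
  Ed :: "'c edge set"

definition nodes :: "'c arena \<Rightarrow> nat set" where
  "nodes A = VP A \<union> VA A"

definition src :: "'c edge \<Rightarrow> nat" where "src e = fst e"
definition col :: "'c edge \<Rightarrow> 'c" where "col e = fst (snd e)"
definition tgt :: "'c edge \<Rightarrow> nat" where "tgt e = snd (snd e)"

definition is_arena :: "'c set \<Rightarrow> 'c arena \<Rightarrow> bool" where
  "is_arena C A \<longleftrightarrow> finite (VP A) \<and> finite (VA A) \<and> finite (Ed A) \<and>
     VP A \<inter> VA A = {} \<and> nodes A \<noteq> {} \<and>
     Ed A \<subseteq> nodes A \<times> C \<times> nodes A \<and>
     (\<forall>v\<in>nodes A. \<exists>e\<in>Ed A. src e = v)"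

(* a finite path is a start node v with a list of consecutive edges;
   (v, []) is the 0-length path lambda_v *)
type_synonym 'c fpath = "nat \<times> 'c edge list"

definition is_fpath :: "'c arena \<Rightarrow> 'c fpath \<Rightarrow> bool" where
  "is_fpath A p \<longleftrightarrow> (case p of (v, es) \<Rightarrow>
      v \<in> nodes A \<and> set es \<subseteq> Ed A \<and>
      (es \<noteq> [] \<longrightarrow> src (hd es) = v) \<and>
      (\<forall>i. Suc i < length es \<longrightarrow> tgt (es ! i) = src (es ! Suc i)))"

definition last_node :: "'c fpath \<Rightarrow> nat" where
  "last_node p = (case p of (v, es) \<Rightarrow> if es = [] then v else tgt (last es))"

definition is_ipath :: "'c arena \<Rightarrow> nat \<Rightarrow> (nat \<Rightarrow> 'c edge) \<Rightarrow> bool" where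
  "is_ipath A u es \<longleftrightarrow> u \<in> nodes A \<and> (\<forall>i. es i \<in> Ed A) \<and> src (es 0) = u \<and>
      (\<forall>i. tgt (es i) = src (es (Suc i)))"

definition prefix :: "(nat \<Rightarrow> 'c edge) \<Rightarrow> nat \<Rightarrow> 'c edge list" where
  "prefix es n = map es [0..<n]"

type_synonym 'c strategy = "'c fpath \<Rightarrow> 'c edge"

definition is_strategy :: "'c arena \<Rightarrow> 'c strategy \<Rightarrow> bool" where
  "is_strategy A S \<longleftrightarrow> (\<forall>p. is_fpath A p \<and> last_node p \<in> VP A \<longrightarrow>
      S p \<in> Ed A \<and> src (S p) = last_node p)"

definition consistent_ipath :: "'c arena \<Rightarrow> 'c strategy \<Rightarrow> nat \<Rightarrow> (nat \<Rightarrow> 'c edge) \<Rightarrow> bool" where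
  "consistent_ipath A S u es \<longleftrightarrow> is_ipath A u es \<and>
      (\<forall>i. src (es i) \<in> VP A \<longrightarrow> es i = S (u, prefix es i))"

definition winning_from :: "'c arena \<Rightarrow> (nat \<Rightarrow> 'c) set \<Rightarrow> 'c strategy \<Rightarrow> nat \<Rightarrow> bool" where
  "winning_from A W S u \<longleftrightarrow>
     (\<forall>es. consistent_ipath A S u es \<longrightarrow> (\<lambda>i. col (es i)) \<in> W)"

definition optimal :: "'c arena \<Rightarrow> (nat \<Rightarrow> 'c) set \<Rightarrow> 'c strategy \<Rightarrow> bool" where
  "optimal A W S \<longleftrightarrow>
     \<not> (\<exists>u\<in>nodes A. (\<exists>S'. is_strategy A S' \<and> winning_from A W S' u) \<and> \<not> winning_from A W S u)"

definition is_memory :: "'c arena \<Rightarrow> nat set \<Rightarrow> nat \<Rightarrow> (nat \<Rightarrow> 'c edge \<Rightarrow> nat) \<Rightarrow> bool" where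
  "is_memory A M m0 \<delta> \<longleftrightarrow> finite M \<and> m0 \<in> M \<and> (\<forall>m\<in>M. \<forall>e\<in>Ed A. \<delta> m e \<in> M)"

definition chromatic :: "'c arena \<Rightarrow> nat set \<Rightarrow> (nat \<Rightarrow> 'c edge \<Rightarrow> nat) \<Rightarrow> bool" where
  "chromatic A M \<delta> \<longleftrightarrow>
     (\<forall>m\<in>M. \<forall>e1\<in>Ed A. \<forall>e2\<in>Ed A. col e1 = col e2 \<longrightarrow> \<delta> m e1 = \<delta> m e2)"

definition mem_after :: "nat \<Rightarrow> (nat \<Rightarrow> 'c edge \<Rightarrow> nat) \<Rightarrow> 'c fpath \<Rightarrow> nat" where
  "mem_after m0 \<delta> p = fold (\<lambda>e m. \<delta> m e) (snd p) m0"

definition built_on_top :: "'c arena \<Rightarrow> nat \<Rightarrow> (nat \<Rightarrow> 'c edge \<Rightarrow> nat) \<Rightarrow> 'c strategy \<Rightarrow> bool" where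
  "built_on_top A m0 \<delta> S \<longleftrightarrow>
     (\<forall>p q. is_fpath A p \<and> is_fpath A q \<and> last_node p \<in> VP A \<and>
            last_node p = last_node q \<and> mem_after m0 \<delta> p = mem_after m0 \<delta> q
            \<longrightarrow> S p = S q)"

definition chr_mem_ok :: "'c set \<Rightarrow> (nat \<Rightarrow> 'c) set \<Rightarrow> nat \<Rightarrow> bool" where
  "chr_mem_ok C W k \<longleftrightarrow>
     (\<forall>A. is_arena C A \<longrightarrow>
        (\<exists>M m0 \<delta> S. is_memory A M m0 \<delta> \<and> card M = k \<and> chromatic A M \<delta> \<and>
                    is_strategy A S \<and> built_on_top A m0 \<delta> S \<and> optimal A W S))"

definition ChrMem :: "'c set \<Rightarrow> (nat \<Rightarrow> 'c) set \<Rightarrow> enat" where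
  "ChrMem C W = (if \<exists>k>0. chr_mem_ok C W k
                 then enat (LEAST k. k > 0 \<and> chr_mem_ok C W k) else \<infinity>)"

end

theory Submission
  imports Defs
begin

definition uf :: "omega \<Rightarrow> omega" where "uf x = (Suc (fst x), snd x)"
definition Pw :: "nat \<Rightarrow> bool" where "Pw n = (\<exists>j. n = 2^j)"
definition tf :: "omega \<Rightarrow> omega" where "tf x = (fst x, snd x \<noteq> Pw (fst x))"
definition df :: "omega \<Rightarrow> omega" where
  "df x = (if 2 \<le> fst x then (fst x - 1, snd x) else (0, False))"
definition ff :: "bool \<Rightarrow> omega \<Rightarrow> omega" where
  "ff \<beta> x = (if snd x = \<beta> then fst x else Suc (fst x), False)"
definition escf :: "omega \<Rightarrow> omega" where
  "escf x = (if fst x \<le> 1 then x else (Suc (fst x), snd x))"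
definition CC :: "(omega \<Rightarrow> omega) set" where
  "CC = {uf, tf, df, ff False, ff True, escf}"

lemma CC_mono: "CC \<subseteq> MonoFun"
  unfolding CC_def MonoFun_def oleq_def
  by (auto simp: uf_def tf_def df_def ff_def escf_def)

definition mc :: "nat \<Rightarrow> nat \<Rightarrow> bool \<Rightarrow> nat" where "mc a b c = (if c then b else a)"
definition nd :: "nat \<Rightarrow> nat \<Rightarrow> bool \<Rightarrow> nat \<Rightarrow> nat" where
  "nd a b c i = (if i = 0 then 0 else if i = 2 * mc a b c then 1 else 2*i + (if c then 1 else 0) + 2)"
definition wcol :: "nat \<Rightarrow> nat \<Rightarrow> omega \<Rightarrow> omega" where
  "wcol m i = (if i < m then uf else if i = m then tf else df)"
definition EE :: "nat \<Rightarrow> nat \<Rightarrow> bool \<Rightarrow> nat \<Rightarrow> (omega \<Rightarrow> omega) edge" where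
  "EE a b c i = (nd a b c i, wcol (mc a b c) i, nd a b c (Suc i))"
definition Ar :: "nat \<Rightarrow> nat \<Rightarrow> (omega \<Rightarrow> omega) arena" where
  "Ar a b = (| VP = {1}, VA = {0,2} \<union> {nd a b c i | c i. 0 < i \<and> i < 2 * mc a b c},
     Ed = {EE a b c i | c i. i < 2 * mc a b c} \<union> {(1, ff False, 2), (1, ff True, 2), (2, escf, 2)} |)"

lemma src_EE[simp]: "src (EE a b c i) = nd a b c i" by (simp add: src_def EE_def)
lemma tgt_EE[simp]: "tgt (EE a b c i) = nd a b c (Suc i)" by (simp add: tgt_def EE_def)
lemma col_EE[simp]: "col (EE a b c i) = wcol (mc a b c) i" by (simp add: col_def EE_def)

lemma nd_cases: "i < 2 * mc a b c \<Longrightarrow> (i = 0 \<and> nd a b c i = 0) \<or> (0 < i \<and> nd a b c i \<ge> 4)"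
  by (auto simp: nd_def)
lemma nd0[simp]: "nd a b c 0 = 0" by (simp add: nd_def)
lemma ndlen[simp]: "0 < mc a b c \<Longrightarrow> nd a b c (2 * mc a b c) = 1" by (simp add: nd_def)
lemma nd_inj: "0<i \<Longrightarrow> i<2*mc a b c \<Longrightarrow> 0<j \<Longrightarrow> j < 2*mc a b c' \<Longrightarrow> nd a b c i = nd a b c' j
   \<Longrightarrow> c = c' \<and> i = j"
  unfolding nd_def by (cases c; cases c'; simp; presburger)

lemma Ed_cases:
  assumes "e \<in> Ed (Ar a b)"
  shows "(\<exists>c i. i < 2*mc a b c \<and> e = EE a b c i) \<or> e = (1,ff False,2) \<or> e = (1,ff True,2) \<or> e = (2,escf,2)"
  using assms by (auto simp: Ar_def)

lemma from1: "e \<in> Ed (Ar a b) \<Longrightarrow> src e = 1 \<Longrightarrow> e = (1,ff False,2) \<or> e = (1,ff True,2)"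
proof -
  assume e: "e \<in> Ed (Ar a b)" and s: "src e = 1"
  show ?thesis using Ed_cases[OF e]
  proof (elim disjE exE conjE)
    fix c i assume h: "i < 2*mc a b c" "e = EE a b c i"
    then have "nd a b c i = 1" using s by simp
    then show ?thesis using nd_cases[OF h(1)] by auto
  qed (insert s, auto simp: src_def)
qed

lemma from2: "e \<in> Ed (Ar a b) \<Longrightarrow> src e = 2 \<Longrightarrow> e = (2,escf,2)"
proof -
  assume e: "e \<in> Ed (Ar a b)" and s: "src e = 2"
  show ?thesis using Ed_cases[OF e]
  proof (elim disjE exE conjE)
    fix c i assume h: "i < 2*mc a b c" "e = EE a b c i"
    then have "nd a b c i = 2" using s by simp
    then show ?thesis using nd_cases[OF h(1)] by auto
  qed (insert s, auto simp: src_def)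
qed


lemma mc_ge: "2 \<le> a \<Longrightarrow> 2 \<le> b \<Longrightarrow> 2 \<le> mc a b c" by (simp add: mc_def)

lemma path_chain:
  assumes ab: "2 \<le> a" "2 \<le> b" and p: "is_ipath (Ar a b) 0 es"
  shows "\<exists>c. \<forall>i<2*mc a b c. es i = EE a b c i"
proof -
  have E: "\<And>i. es i \<in> Ed (Ar a b)" and s0: "src (es 0) = 0"
    and st: "\<And>i. tgt (es i) = src (es (Suc i))" using p by (auto simp: is_ipath_def)
  have "es 0 \<noteq> (1,ff False,2)" "es 0 \<noteq> (1,ff True,2)" "es 0 \<noteq> (2,escf,2)"
    using s0 by (auto simp: src_def)
  then obtain c i where ci: "i < 2*mc a b c" "es 0 = EE a b c i"
    using Ed_cases[OF E[of 0]] by blast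
  have i0: "i = 0" using nd_cases[OF ci(1)] s0 ci(2) by auto
  have "\<forall>j. j < 2*mc a b c \<longrightarrow> es j = EE a b c j"
  proof
    fix j show "j < 2*mc a b c \<longrightarrow> es j = EE a b c j"
    proof (induction j)
      case 0 then show ?case using ci i0 by simp
    next
      case (Suc j)
      show ?case
      proof
        assume lt: "Suc j < 2*mc a b c"
        have ej: "es j = EE a b c j" using Suc lt by simp
        have sr: "src (es (Suc j)) = nd a b c (Suc j)" using st[of j] ej by simp
        have ge4: "nd a b c (Suc j) \<ge> 4" using nd_cases[OF lt] by auto
        have "es (Suc j) \<noteq> (1,ff False,2)" "es (Suc j) \<noteq> (1,ff True,2)" "es (Suc j) \<noteq> (2,escf,2)"
          using sr ge4 by (auto simp: src_def)
        then obtain c' i' where h: "i' < 2*mc a b c'" "es (Suc j) = EE a b c' i'"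
          using Ed_cases[OF E[of "Suc j"]] by blast
        have eq: "nd a b c' i' = nd a b c (Suc j)" using sr h by simp
        have ip: "0 < i'" using nd_cases[OF h(1)] ge4 eq by auto
        have "c' = c \<and> i' = Suc j" using nd_inj[OF ip h(1) zero_less_Suc lt] eq by simp
        then show "es (Suc j) = EE a b c (Suc j)" using h by simp
      qed
    qed
  qed
  then show ?thesis by blast
qed



lemma stay2:
  assumes p: "is_ipath (Ar a b) 0 es" and s: "src (es n) = 2"
  shows "src (es (n + j)) = 2"
proof (induction j)
  case 0 then show ?case using s by simp
next
  case (Suc j)
  have E: "es (n + j) \<in> Ed (Ar a b)" using p by (simp add: is_ipath_def)
  have "es (n + j) = (2,escf,2)" using from2[OF E Suc] .
  moreover have "tgt (es (n + j)) = src (es (Suc (n + j)))" using p by (simp add: is_ipath_def)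
  ultimately show ?case by (simp add: tgt_def)
qed

lemma path_after:
  assumes ab: "2 \<le> a" "2 \<le> b" and p: "is_ipath (Ar a b) 0 es"
    and ch: "\<forall>i<2*mc a b c. es i = EE a b c i"
  shows "es (2*mc a b c) = (1,ff False,2) \<or> es (2*mc a b c) = (1,ff True,2)"
    and "es (Suc (2*mc a b c) + j) = (2,escf,2)"
proof -
  have E: "\<And>i. es i \<in> Ed (Ar a b)"
    and st: "\<And>i. tgt (es i) = src (es (Suc i))" using p by (auto simp: is_ipath_def)
  have m2: "2 \<le> mc a b c" using mc_ge ab by blast
  have "es (2*mc a b c - 1) = EE a b c (2*mc a b c - 1)" using ch m2 by simp
  moreover have sm: "Suc (2*mc a b c - 1) = 2*mc a b c" using m2 by simp
  ultimately have "tgt (es (2*mc a b c - 1)) = 1" using m2 by simp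
  then have "src (es (2*mc a b c)) = 1" using st[of "2*mc a b c - 1"] unfolding sm by simp
  then show 1: "es (2*mc a b c) = (1,ff False,2) \<or> es (2*mc a b c) = (1,ff True,2)"
    using from1[OF E] by blast
  have "tgt (es (2*mc a b c)) = 2" using 1 by (auto simp: tgt_def)
  then have "src (es (Suc (2*mc a b c))) = 2" using st[of "2*mc a b c"] by simp
  then have "src (es (Suc (2*mc a b c) + j)) = 2" using stay2[OF p] by blast
  then show "es (Suc (2*mc a b c) + j) = (2,escf,2)" using from2[OF E] by blast
qed

lemma run1:
  assumes m: "1 \<le> m" and cs: "\<forall>i<2*m. cs i = wcol m i"
  shows "n \<le> 2*m \<Longrightarrow> comp_seq cs n (0,False) = (if n \<le> m then (n,False) else (2*m+1-n, Pw m))"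
proof (induction n)
  case 0 then show ?case by simp
next
  case (Suc n)
  then have IH: "comp_seq cs n (0,False) = (if n \<le> m then (n,False) else (2*m+1-n, Pw m))" by simp
  have c: "cs n = wcol m n" using cs Suc.prems by simp
  show ?case
  proof (cases "n < m")
    case True then show ?thesis using IH c by (simp add: wcol_def uf_def)
  next
    case False
    show ?thesis
    proof (cases "n = m")
      case True then show ?thesis using IH c by (simp add: wcol_def tf_def)
    next
      case False
      have "2 \<le> Suc (2*m) - n" using \<open>\<not> n < m\<close> Suc.prems False by arith
      then show ?thesis using IH c \<open>\<not> n < m\<close> Suc.prems False by (simp add: wcol_def df_def)
    qed
  qed
qed

lemma run2:
  assumes m: "1 \<le> m" and cs: "\<forall>i<2*m. cs i = wcol m i" and c2: "cs (2*m) = ff \<beta>"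
    and c3: "\<forall>j. cs (Suc (2*m) + j) = escf"
  shows "comp_seq cs (Suc (2*m) + j) (0,False) = (if \<beta> = Pw m then (1,False) else (2+j,False))"
proof (induction j)
  case 0
  have "comp_seq cs (2*m) (0,False) = (1, Pw m)" using run1[OF m cs, of "2*m"] m by simp
  then show ?case using c2 by (auto simp: ff_def)
next
  case (Suc j)
  have e: "Suc (2*m) + Suc j = Suc (Suc (2*m) + j)" by simp
  show ?case unfolding e using Suc c3 by (auto simp: escf_def)
qed


lemma period:
  assumes fin: "finite M" and cM: "card M = k" and cl: "\<forall>x\<in>M. f x \<in> M" and x: "x \<in> M"
    and j: "k \<le> j"
  shows "(f^^(j + fact k)) x = (f^^j) x"
proof -
  define g where "g i = (f^^i) x" for i
  have gM: "g i \<in> M" for i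
    by (induction i) (auto simp: g_def cl x)
  have ni: "\<not> inj_on g {0..k}"
  proof
    assume "inj_on g {0..k}"
    then have "card (g ` {0..k}) = k+1" by (simp add: card_image)
    moreover have "g ` {0..k} \<subseteq> M" using gM by auto
    ultimately have "k+1 \<le> card M" using card_mono fin by metis
    then show False using cM by simp
  qed
  obtain p q where pq: "p < q" "q \<le> k" "g p = g q"
  proof -
    obtain i i' where ii: "i \<in> {0..k}" "i' \<in> {0..k}" "i \<noteq> i'" "g i = g i'"
      using ni unfolding inj_on_def by blast
    show ?thesis
    proof (cases "i < i'")
      case True then show ?thesis using that[of i i'] ii by auto
    next
      case False then have "i' < i" using ii(3) by simp
      then show ?thesis using that[of i' i] ii by auto
    qed
  qed
  have per: "g (n + (q - p)) = g n" if "p \<le> n" for n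
  proof -
    have "g (n + (q-p)) = (f^^((n-p) + q)) x" unfolding g_def using that pq by (simp add: algebra_simps)
    also have "\<dots> = (f^^(n-p)) (g q)" by (simp add: funpow_add g_def)
    also have "\<dots> = (f^^(n-p)) (g p)" using pq by simp
    also have "\<dots> = (f^^((n-p)+p)) x" by (simp add: funpow_add g_def)
    also have "\<dots> = g n" using that by (simp add: g_def)
    finally show ?thesis .
  qed
  define d where "d = q - p"
  have per2: "g (n + c*d) = g n" if "p \<le> n" for n c
  proof (induction c)
    case 0 then show ?case by simp
  next
    case (Suc c)
    have "g (n + Suc c*d) = g ((n + c*d) + d)" by (simp add: algebra_simps)
    also have "\<dots> = g (n + c*d)" using per that unfolding d_def by simp
    finally show ?case using Suc by simp
  qed
  have "(q-p) dvd fact k" using pq by (intro dvd_fact) auto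
  then obtain c where c: "fact k = (q-p) * c" by (auto simp: dvd_def)
  have "g (j + c*d) = g j" using per2[of j c] j pq by simp
  then show ?thesis using c unfolding g_def d_def by (simp add: mult.commute)
qed

lemma EE_in: "i < 2*mc a b c \<Longrightarrow> EE a b c i \<in> Ed (Ar a b)"
  by (auto simp: Ar_def)

lemma mem_chain:
  assumes ab: "2 \<le> a" "2 \<le> b" and mem: "is_memory (Ar a b) M mi \<delta>"
    and chr: "chromatic (Ar a b) M \<delta>"
  defines "U \<equiv> \<lambda>y. \<delta> y (EE a b False 0)" and "T \<equiv> \<lambda>y. \<delta> y (EE a b False a)"
    and "D \<equiv> \<lambda>y. \<delta> y (EE a b False (Suc a))"
  shows "n \<le> 2*mc a b c \<Longrightarrow> fold (\<lambda>e m. \<delta> m e) (map (EE a b c) [0..<n]) mi \<in> M \<and>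
     fold (\<lambda>e m. \<delta> m e) (map (EE a b c) [0..<n]) mi =
       (if n \<le> mc a b c then (U^^n) mi else (D^^(n - mc a b c - 1)) (T ((U^^(mc a b c)) mi)))"
proof (induction n)
  case 0 then show ?case using mem by (simp add: is_memory_def)
next
  case (Suc n)
  define y where "y = fold (\<lambda>e m. \<delta> m e) (map (EE a b c) [0..<n]) mi"
  have IH: "y \<in> M" "y = (if n \<le> mc a b c then (U^^n) mi else (D^^(n - mc a b c - 1)) (T ((U^^(mc a b c)) mi)))"
    using Suc unfolding y_def by auto
  have eq: "fold (\<lambda>e m. \<delta> m e) (map (EE a b c) [0..<Suc n]) mi = \<delta> y (EE a b c n)"
    by (simp add: y_def)
  have En: "EE a b c n \<in> Ed (Ar a b)" using Suc.prems by (intro EE_in) simp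
  have inM: "\<delta> y (EE a b c n) \<in> M" using mem IH(1) En by (simp add: is_memory_def)
  have chr': "\<delta> y e1 = \<delta> y e2" if "e1 \<in> Ed (Ar a b)" "e2 \<in> Ed (Ar a b)" "col e1 = col e2" for e1 e2
    using chr IH(1) that unfolding chromatic_def by blast
  have E0: "EE a b False 0 \<in> Ed (Ar a b)" "EE a b False a \<in> Ed (Ar a b)" "EE a b False (Suc a) \<in> Ed (Ar a b)"
    using ab by (auto intro!: EE_in simp: mc_def)
  have val: "\<delta> y (EE a b c n) = (if Suc n \<le> mc a b c then (U^^Suc n) mi else (D^^(Suc n - mc a b c - 1)) (T ((U^^(mc a b c)) mi)))"
  proof (cases "n < mc a b c")
    case True
    have "\<delta> y (EE a b c n) = U y" unfolding U_def
      by (rule chr'[OF En E0(1)]) (use True ab in \<open>simp add: wcol_def mc_def\<close>)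
    then show ?thesis using True IH(2) by simp
  next
    case False
    show ?thesis
    proof (cases "n = mc a b c")
      case True
      have "\<delta> y (EE a b c n) = T y" unfolding T_def
        by (rule chr'[OF En E0(2)]) (use True ab in \<open>simp add: wcol_def mc_def\<close>)
      then show ?thesis using True IH(2) by simp
    next
      case F2: False
      have "\<delta> y (EE a b c n) = D y" unfolding D_def
        by (rule chr'[OF En E0(3)]) (use False F2 ab in \<open>simp add: wcol_def mc_def\<close>)
      moreover have "Suc n - mc a b c - 1 = Suc (n - mc a b c - 1)" using False F2 by simp
      ultimately show ?thesis using False F2 IH(2) by simp
    qed
  qed
  show ?case using eq inM val by simp
qed


lemma arena_ok:
  assumes ab: "2 \<le> a" "2 \<le> b"
  shows "is_arena CC (Ar a b)"
proof -
  have m2: "\<And>c. 2 \<le> mc a b c" using mc_ge ab by blast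
  have f1: "{nd a b c i | c i. 0 < i \<and> i < 2 * mc a b c} \<subseteq> (\<lambda>(c,i). nd a b c i) ` (UNIV \<times> {..<2*(a+b)})"
    by (auto simp: mc_def split: if_splits)
  have f2: "{EE a b c i | c i. i < 2 * mc a b c} \<subseteq> (\<lambda>(c,i). EE a b c i) ` (UNIV \<times> {..<2*(a+b)})"
  proof
    fix e assume "e \<in> {EE a b c i | c i. i < 2 * mc a b c}"
    then obtain c i where h: "i < 2 * mc a b c" "e = EE a b c i" by blast
    then show "e \<in> (\<lambda>(c,i). EE a b c i) ` (UNIV \<times> {..<2*(a+b)})"
      by (intro image_eqI[of _ _ "(c,i)"]) (auto simp: mc_def split: if_splits)
  qed
  have fin1: "finite {nd a b c i | c i. 0 < i \<and> i < 2 * mc a b c}"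
    by (rule finite_subset[OF f1]) simp
  have fin2: "finite {EE a b c i | c i. i < 2 * mc a b c}"
    by (rule finite_subset[OF f2]) simp
  have disj: "VP (Ar a b) \<inter> VA (Ar a b) = {}"
  proof -
    have h: "nd a b c i \<noteq> 1" if "0 < i" "i < 2 * mc a b c" for c i
      using nd_cases[of i a b c] that by auto
    have "1 \<notin> {nd a b c i | c i. 0 < i \<and> i < 2 * mc a b c}"
      using h by (simp only: mem_Collect_eq) metis
    then show ?thesis by (auto simp: Ar_def)
  qed
  have nodes: "nodes (Ar a b) = {0,1,2} \<union> {nd a b c i | c i. 0 < i \<and> i < 2 * mc a b c}"
    by (auto simp: nodes_def Ar_def)
  have ndin: "nd a b c i \<in> nodes (Ar a b)" if "i \<le> 2 * mc a b c" for c i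
  proof (cases "i = 0 \<or> i = 2 * mc a b c")
    case True then show ?thesis unfolding nodes using m2[of c] by auto
  next
    case False then have "0 < i" "i < 2 * mc a b c" using that by auto
    then have "nd a b c i \<in> {nd a b c i | c i. 0 < i \<and> i < 2 * mc a b c}" by blast
    then show ?thesis unfolding nodes by blast
  qed
  have colC: "wcol m i \<in> CC" for m i by (simp add: wcol_def CC_def)
  have n12: "1 \<in> nodes (Ar a b)" "2 \<in> nodes (Ar a b)" "0 \<in> nodes (Ar a b)" unfolding nodes by simp_all
  have cc: "ff False \<in> CC" "ff True \<in> CC" "escf \<in> CC" by (simp_all add: CC_def)
  have edges: "Ed (Ar a b) \<subseteq> nodes (Ar a b) \<times> CC \<times> nodes (Ar a b)"
  proof
    fix e assume e: "e \<in> Ed (Ar a b)"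
    show "e \<in> nodes (Ar a b) \<times> CC \<times> nodes (Ar a b)"
      using Ed_cases[OF e]
    proof (elim disjE exE conjE)
      fix c i assume h: "i < 2 * mc a b c" "e = EE a b c i"
      then show ?thesis using ndin[of i c] ndin[of "Suc i" c] colC by (simp add: EE_def)
    next
      assume "e = (1, ff False, 2)" then show ?thesis using n12 cc by simp
    next
      assume "e = (1, ff True, 2)" then show ?thesis using n12 cc by simp
    next
      assume "e = (2, escf, 2)" then show ?thesis using n12 cc by simp
    qed
  qed
  have out: "\<forall>v\<in>nodes (Ar a b). \<exists>e\<in>Ed (Ar a b). src e = v"
  proof
    fix v assume "v \<in> nodes (Ar a b)"
    then have "v \<in> {0,1,2} \<or> (\<exists>c i. 0 < i \<and> i < 2 * mc a b c \<and> v = nd a b c i)"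
      unfolding nodes by blast
    then show "\<exists>e\<in>Ed (Ar a b). src e = v"
    proof (elim disjE exE conjE)
      fix c i assume h: "0 < i" "i < 2 * mc a b c" "v = nd a b c i"
      then show ?thesis using EE_in[OF h(2)] src_EE by metis
    next
      assume "v \<in> {0,1,2}"
      moreover have "EE a b False 0 \<in> Ed (Ar a b)" using m2[of False] by (intro EE_in) simp
      moreover have "(1, ff False, 2) \<in> Ed (Ar a b)" "(2, escf, 2) \<in> Ed (Ar a b)" by (simp_all add: Ar_def)
      ultimately consider "v = 0" | "v = 1" | "v = 2" by blast
      then show ?thesis
      proof cases
        case 1 then show ?thesis using \<open>EE a b False 0 \<in> Ed (Ar a b)\<close> src_EE nd0 by metis
      next
        case 2 then show ?thesis using \<open>(1, ff False, 2) \<in> Ed (Ar a b)\<close> unfolding src_def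
          by (intro bexI[of _ "(1, ff False, 2)"]) simp_all
      next
        case 3 then show ?thesis using \<open>(2, escf, 2) \<in> Ed (Ar a b)\<close> unfolding src_def
          by (intro bexI[of _ "(2, escf, 2)"]) simp_all
      qed
    qed
  qed
  have "finite (VP (Ar a b))" "finite (VA (Ar a b))" "finite (Ed (Ar a b))"
    using fin1 fin2 by (simp_all add: Ar_def)
  moreover have "nodes (Ar a b) \<noteq> {}" using n12 by blast
  ultimately show ?thesis unfolding is_arena_def using disj edges out by blast
qed

lemma col_CC: "e \<in> Ed (Ar a b) \<Longrightarrow> col e \<in> CC"
  by (drule Ed_cases) (auto simp: col_def CC_def wcol_def EE_def)

lemma colseq_bounded:
  assumes m: "1 \<le> m" and cs: "\<forall>i<2*m. cs i = wcol m i" and c2: "cs (2*m) = ff (Pw m)"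
    and c3: "\<forall>j. cs (Suc (2*m) + j) = escf"
  shows "oleq (comp_seq cs n (0,False)) (Suc m, False)"
proof (cases "n \<le> 2*m")
  case True
  then show ?thesis using run1[OF m cs True] by (auto simp: oleq_def)
next
  case False
  then obtain j where "n = Suc (2*m) + j" by (metis add_Suc less_imp_Suc_add not_le)
  then show ?thesis using run2[OF m cs c2 c3, of j] m by (auto simp: oleq_def)
qed

lemma colseq_unbounded:
  assumes m: "1 \<le> m" and cs: "\<forall>i<2*m. cs i = wcol m i" and c2: "cs (2*m) = ff \<beta>"
    and c3: "\<forall>j. cs (Suc (2*m) + j) = escf" and ne: "\<beta> \<noteq> Pw m"
  shows "cs \<notin> RL"
proof
  assume "cs \<in> RL"
  then obtain N b where h: "\<forall>n\<ge>1. oleq (comp_seq cs n (0, False)) (N, b)" by (auto simp: RL_def)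
  have "oleq (comp_seq cs (Suc (2*m) + N) (0, False)) (N, b)" by (rule h[rule_format]) simp
  then show False using run2[OF m cs c2 c3, of N] ne by (simp add: oleq_def)
qed

lemma fpath_chain:
  assumes ab: "2 \<le> a" "2 \<le> b"
  shows "is_fpath (Ar a b) (0, map (EE a b c) [0..<2*mc a b c])"
    and "last_node (0, map (EE a b c) [0..<2*mc a b c]) = 1"
proof -
  have m2: "2 \<le> mc a b c" using mc_ge ab by blast
  have "0 \<in> nodes (Ar a b)" by (simp add: nodes_def Ar_def)
  moreover have "set (map (EE a b c) [0..<2*mc a b c]) \<subseteq> Ed (Ar a b)" using EE_in by auto
  moreover have "hd (map (EE a b c) [0..<2*mc a b c]) = EE a b c 0" using m2
    by (simp add: hd_map upt_rec)
  ultimately show "is_fpath (Ar a b) (0, map (EE a b c) [0..<2*mc a b c])"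
    unfolding is_fpath_def using m2 by auto
  have "last (map (EE a b c) [0..<2*mc a b c]) = EE a b c (2*mc a b c - 1)" using m2
    by (simp add: last_map)
  moreover have "Suc (2*mc a b c - 1) = 2*mc a b c" using m2 by simp
  ultimately show "last_node (0, map (EE a b c) [0..<2*mc a b c]) = 1"
    unfolding last_node_def using m2 by simp
qed


lemma src_after_chain:
  assumes ab: "2 \<le> a" "2 \<le> b" and p: "is_ipath (Ar a b) 0 es"
    and ch: "\<forall>i<2*mc a b c. es i = EE a b c i"
  shows "src (es (2*mc a b c)) = 1"
  using path_after(1)[OF ab p ch] by (auto simp: src_def)

lemma win:
  assumes ab: "2 \<le> a" "2 \<le> b" and Pa: "Pw a" and Pb: "\<not> Pw b" and ne: "a \<noteq> b"
  defines "S' \<equiv> \<lambda>p::(omega\<Rightarrow>omega) fpath. if length (snd p) = 2*a then (1::nat, ff True, 2::nat) else (1, ff False, 2)"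
  shows "is_strategy (Ar a b) S'" and "winning_from (Ar a b) (RL \<inter> omega_seqs CC) S' 0"
proof -
  have e1: "(1::nat, ff True, 2::nat) \<in> Ed (Ar a b)" "(1::nat, ff False, 2::nat) \<in> Ed (Ar a b)"
    by (simp_all add: Ar_def)
  have VP: "VP (Ar a b) = {1}" by (simp add: Ar_def)
  show "is_strategy (Ar a b) S'" unfolding is_strategy_def S'_def VP using e1 by (simp add: src_def)
  show "winning_from (Ar a b) (RL \<inter> omega_seqs CC) S' 0"
    unfolding winning_from_def
  proof (intro allI impI)
    fix es assume cons: "consistent_ipath (Ar a b) S' 0 es"
    then have p: "is_ipath (Ar a b) 0 es" and cs: "\<And>i. src (es i) \<in> VP (Ar a b) \<Longrightarrow> es i = S' (0, prefix es i)"
      by (auto simp: consistent_ipath_def)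
    obtain c where ch: "\<forall>i<2*mc a b c. es i = EE a b c i" using path_chain[OF ab p] by blast
    define m where "m = mc a b c"
    have m2: "2 \<le> m" using mc_ge ab m_def by blast
    have "src (es (2*m)) = 1" using src_after_chain[OF ab p ch] m_def by simp
    then have "es (2*m) = S' (0, prefix es (2*m))" using cs by (simp add: Ar_def)
    also have "\<dots> = (1, ff (Pw m), 2)" using Pa Pb ne
      by (cases c) (auto simp: S'_def prefix_def m_def mc_def)
    finally have eL: "es (2*m) = (1, ff (Pw m), 2)" .
    have eA: "es (Suc (2*m) + j) = (2, escf, 2)" for j using path_after(2)[OF ab p ch] m_def by simp
    define cl where "cl = (\<lambda>i. col (es i))"
    have E: "\<And>i. es i \<in> Ed (Ar a b)" using p by (simp add: is_ipath_def)
    have clC: "\<And>i. cl i \<in> CC" unfolding cl_def using col_CC[OF E] .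
    have c1: "\<forall>i<2*m. cl i = wcol m i" using ch m_def cl_def by simp
    have c2: "cl (2*m) = ff (Pw m)" using eL by (simp add: cl_def col_def)
    have c3: "\<forall>j. cl (Suc (2*m) + j) = escf" using eA by (simp add: cl_def col_def)
    have bd: "\<forall>n\<ge>1. oleq (comp_seq cl n (0, False)) (Suc m, False)"
      using colseq_bounded[OF _ c1 c2 c3] m2 by simp
    have "cl \<in> RL" unfolding RL_def using bd clC CC_mono by blast
    moreover have "cl \<in> omega_seqs CC" unfolding omega_seqs_def using clC by blast
    ultimately show "(\<lambda>i. col (es i)) \<in> RL \<inter> omega_seqs CC" unfolding cl_def by blast
  qed
qed

lemma lose:
  assumes ab: "2 \<le> a" "2 \<le> b" and Pa: "Pw a" and Pb: "\<not> Pw b"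
    and strat: "is_strategy (Ar a b) S"
    and same: "S (0, map (EE a b False) [0..<2*a]) = S (0, map (EE a b True) [0..<2*b])"
  shows "\<not> winning_from (Ar a b) (RL \<inter> omega_seqs CC) S 0"
proof -
  define e where "e = S (0, map (EE a b False) [0..<2*a])"
  have fp: "is_fpath (Ar a b) (0, map (EE a b False) [0..<2*mc a b False])"
    "last_node (0, map (EE a b False) [0..<2*mc a b False]) = 1"
    using fpath_chain[OF ab] by blast+
  have eE1: "e \<in> Ed (Ar a b) \<and> src e = 1"
    using strat fp unfolding is_strategy_def e_def by (simp add: mc_def Ar_def)
  then obtain \<beta> where eb: "e = (1, ff \<beta>, 2)" using from1 by blast
  define c where "c = \<beta>"
  define m where "m = mc a b c"
  have m2: "2 \<le> m" using mc_ge ab m_def by blast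
  have nb: "\<beta> \<noteq> Pw m" using Pa Pb by (cases \<beta>) (auto simp: m_def c_def mc_def)
  have Se: "S (0, map (EE a b c) [0..<2*m]) = e"
    using same by (cases c) (auto simp: e_def m_def mc_def)
  define es where "es = (\<lambda>i. if i < 2*m then EE a b c i else if i = 2*m then e else (2, escf, 2))"
  have e2: "(2::nat, escf, 2::nat) \<in> Ed (Ar a b)" by (simp add: Ar_def)
  have eE: "e \<in> Ed (Ar a b)" using eE1 by simp
  have E: "es i \<in> Ed (Ar a b)" for i using EE_in[of i a b c] eE e2 m_def by (simp add: es_def)
  have srcs: "src (es i) = (if i < 2*m then nd a b c i else if i = 2*m then 1 else 2)" for i
    using eb src_EE by (simp add: es_def) (simp add: src_def)
  have tgts: "tgt (es i) = src (es (Suc i))" for i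
  proof -
    consider "Suc i < 2*m" | "Suc i = 2*m" | "i = 2*m" | "i > 2*m" by linarith
    then show ?thesis
    proof cases
      case 1 then show ?thesis by (simp add: es_def)
    next
      case 2 then show ?thesis using m2 m_def eb by (simp add: es_def src_def)
    next
      case 3 then show ?thesis using eb by (simp add: es_def src_def tgt_def)
    next
      case 4 then show ?thesis by (simp add: es_def src_def tgt_def)
    qed
  qed
  have ip: "is_ipath (Ar a b) 0 es"
    unfolding is_ipath_def using E tgts srcs m2
    by (simp add: nodes_def Ar_def)
  have VPi: "es i = S (0, prefix es i)" if "src (es i) \<in> VP (Ar a b)" for i
  proof -
    have s1: "src (es i) = 1" using that by (simp add: Ar_def)
    have "i = 2*m"
    proof (rule ccontr)
      assume ne: "i \<noteq> 2*m"
      show False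
      proof (cases "i < 2*m")
        case True
        then have "nd a b c i = 1" using s1 srcs by simp
        then show False using nd_cases[of i a b c] True m_def by auto
      next
        case False then show False using s1 srcs ne by simp
      qed
    qed
    moreover have "prefix es (2*m) = map (EE a b c) [0..<2*m]"
      unfolding prefix_def es_def by simp
    ultimately show ?thesis using Se by (simp add: es_def)
  qed
  have cons: "consistent_ipath (Ar a b) S 0 es"
    unfolding consistent_ipath_def using ip VPi by blast
  define cl where "cl = (\<lambda>i. col (es i))"
  have c1: "\<forall>i<2*m. cl i = wcol m i" using m_def by (simp add: cl_def es_def)
  have c2: "cl (2*m) = ff \<beta>" using eb by (simp add: cl_def es_def col_def)
  have c3: "\<forall>j. cl (Suc (2*m) + j) = escf" by (simp add: cl_def es_def col_def)
  have "cl \<notin> RL" using colseq_unbounded[OF _ c1 c2 c3 nb] m2 by simp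
  then show ?thesis unfolding winning_from_def using cons cl_def by blast
qed


lemma not_ok:
  assumes k: "0 < k"
  shows "\<not> chr_mem_ok CC (RL \<inter> omega_seqs CC) k"
proof
  assume ok: "chr_mem_ok CC (RL \<inter> omega_seqs CC) k"
  define L where "L = fact k + k + 1"
  define a where "a = (2::nat)^L"
  define b where "b = a + fact k"
  have fk: "(1::nat) \<le> fact k" by simp
  have La: "L < a" unfolding a_def by simp
  have ab: "2 \<le> a" "2 \<le> b" using La fk unfolding L_def b_def by auto
  have ka: "k \<le> a - 1" using La unfolding L_def by simp
  have Pa: "Pw a" unfolding Pw_def a_def by blast
  have Pb: "\<not> Pw b"
  proof
    assume "Pw b"
    then obtain j where j: "b = 2^j" unfolding Pw_def by blast
    have fpos: "0 < (fact k::nat)" by simp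
    have "a < b" using fpos unfolding b_def by linarith
    then have h1: "a < 2^j" using j by simp
    have "L < j" using h1 unfolding a_def by simp
    moreover have h2: "2^j < 2*a" using j La unfolding b_def L_def by simp
    have "j < Suc L" using h2 unfolding a_def by (simp flip: power_Suc)
    ultimately show False by simp
  qed
  have ne: "a \<noteq> b" using fk unfolding b_def by simp
  obtain M mi \<delta> S where mem: "is_memory (Ar a b) M mi \<delta>" and cM: "card M = k"
    and chr: "chromatic (Ar a b) M \<delta>" and st: "is_strategy (Ar a b) S"
    and bot: "built_on_top (Ar a b) mi \<delta> S" and opt: "optimal (Ar a b) (RL \<inter> omega_seqs CC) S"
    using ok arena_ok[OF ab] unfolding chr_mem_ok_def by blast
  define U where "U \<equiv> \<lambda>y. \<delta> y (EE a b False 0)"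
  define T where "T \<equiv> \<lambda>y. \<delta> y (EE a b False a)"
  define D where "D \<equiv> \<lambda>y. \<delta> y (EE a b False (Suc a))"
  have finM: "finite M" using mem by (simp add: is_memory_def)
  have miM: "mi \<in> M" using mem by (simp add: is_memory_def)
  have E0: "EE a b False 0 \<in> Ed (Ar a b)" "EE a b False (Suc a) \<in> Ed (Ar a b)"
    using ab by (auto intro!: EE_in simp: mc_def)
  have Ucl: "\<forall>x\<in>M. U x \<in> M" using mem E0 unfolding U_def is_memory_def by blast
  have Dcl: "\<forall>x\<in>M. D x \<in> M" using mem E0 unfolding D_def is_memory_def by blast
  note MC = mem_chain[OF ab mem chr, folded U_def T_def D_def]
  have mF: "fold (\<lambda>e m. \<delta> m e) (map (EE a b False) [0..<2*a]) mi = (D^^(a - 1)) (T ((U^^a) mi))"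
    using MC[of "2*a" False] ab by (simp add: mc_def T_def)
  have mT: "fold (\<lambda>e m. \<delta> m e) (map (EE a b True) [0..<2*b]) mi = (D^^(b - 1)) (T ((U^^b) mi))"
    using MC[of "2*b" True] ab by (simp add: mc_def T_def)
  have rM: "T ((U^^a) mi) \<in> M"
    using MC[of "Suc a" False] ab by (simp add: mc_def T_def, metis)
  have "(U^^b) mi = (U^^a) mi" unfolding b_def
    using period[OF finM cM Ucl miM] ka by simp
  moreover have "(D^^(b - 1)) r = (D^^(a - 1)) r" if "r \<in> M" for r
  proof -
    have "b - 1 = (a - 1) + fact k" using ab unfolding b_def by simp
    then show ?thesis using period[OF finM cM Dcl that] ka by simp
  qed
  ultimately have memeq: "mem_after mi \<delta> (0, map (EE a b False) [0..<2*a]) = mem_after mi \<delta> (0, map (EE a b True) [0..<2*b])"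
    unfolding mem_after_def using mF mT rM by simp
  have fpF: "is_fpath (Ar a b) (0, map (EE a b False) [0..<2*a])" "last_node (0, map (EE a b False) [0..<2*a]) = 1"
    using fpath_chain[OF ab, of False] by (simp_all add: mc_def)
  have fpT: "is_fpath (Ar a b) (0, map (EE a b True) [0..<2*b])" "last_node (0, map (EE a b True) [0..<2*b]) = 1"
    using fpath_chain[OF ab, of True] by (simp_all add: mc_def)
  have VP: "VP (Ar a b) = {1}" by (simp add: Ar_def)
  have same: "S (0, map (EE a b False) [0..<2*a]) = S (0, map (EE a b True) [0..<2*b])"
    using bot fpF fpT memeq unfolding built_on_top_def VP by simp
  have nw: "\<not> winning_from (Ar a b) (RL \<inter> omega_seqs CC) S 0" using lose[OF ab Pa Pb st same] .
  define S' where "S' \<equiv> \<lambda>p::(omega\<Rightarrow>omega) fpath. if length (snd p) = 2*a then (1::nat, ff True, 2::nat) else (1, ff False, 2)"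
  have "is_strategy (Ar a b) S'" "winning_from (Ar a b) (RL \<inter> omega_seqs CC) S' 0"
    using win[OF ab Pa Pb ne] unfolding S'_def by blast+
  moreover have "0 \<in> nodes (Ar a b)" by (simp add: nodes_def Ar_def)
  ultimately show False using opt nw unfolding optimal_def by blast
qed

theorem proposition2:
  shows "\<exists>C. finite C \<and> C \<subseteq> MonoFun \<and> ChrMem C (RL \<inter> omega_seqs C) = \<infinity>"
proof (intro exI[of _ CC] conjI)
  show "finite CC" by (simp add: CC_def)
  show "CC \<subseteq> MonoFun" by (rule CC_mono)
  have "\<not> (\<exists>k>0. chr_mem_ok CC (RL \<inter> omega_seqs CC) k)" using not_ok by blast
  then show "ChrMem CC (RL \<inter> omega_seqs CC) = \<infinity>" unfolding ChrMem_def by simp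
qed

end
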